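(* Let $T$ be an infinite set and $R_{T.3}=\mathbf{R}^{(T^3)}=\mathbf{R}^T\times\mathbf{R}^T\times\mathbf{R}^T$, whose cells are $\mathbf{I}[\mathbf{N}]=I^1[N^1]\times I^2[N^2]\times I^3[N^3]$ with $\mathbf{N}=(N^1,N^2,N^3)$ and the $N^j\in\mathcal{N}(T)$ chosen independently. For $j=1,2,3$ let $L^j:\bar{\mathbf{R}}^T\to\mathcal{N}(T)$ be functions and $\delta^j_t:\bar{\mathbf{R}}\to\,]0,\infty[$ ($t\in T$) gauges in $\mathbf{R}$; let $\mathbf{L}(\mathbf{x})=(L^1(x^1_T),L^2(x^2_T),L^3(x^3_T))$ and $\gamma=(\mathbf{L},\{\delta^j_t\}_{t\in T,\,j=1,2,3})$. Then there exists a $\gamma$-fine division of $R_{T.3}$.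
   Context: $\mathcal{N}(T)$ is the family of finite subsets of $T$. A cell of $\mathbf{R}$ is $]u,v]$ ($u<v$ real), $]-\infty,v]$, or $]u,\infty[$; $y\in\bar{\mathbf{R}}=[-\infty,\infty]$ is associated with $I$ if $y$ is a vertex of $I$; for a gauge $\delta$ in $\mathbf{R}$, an associated $(y,I)$ is $\delta$-fine if: $I$ bounded and $|I|<\delta(y)$; or $y=-\infty$, $I=\,]-\infty,v]$, $v<-1/\delta(y)$; or $y=+\infty$, $I=\,]u,\infty[$, $u>1/\delta(y)$. Points of $R_{T.3}$ are $\mathbf{x}=(x^1_T,x^2_T,x^3_T)$ with $x^j_T=(x^j_t)_{t\in T}$ (tags in $(\bar{\mathbf{R}}^T)^3$). For each $j$, $I^j[N^j]=\prod_{t\in N^j}I^j_t\times\mathbf{R}^{T\setminus N^j}$ with each $I^j_t$ a cell of $\mathbf{R}$. $(\mathbf{x},\mathbf{I}[\mathbf{N}])$ is associated if $(x^j_t,I^j_t)$ is associated for all $j$ and $t\in N^j$; it is $\gamma$-fine if, for $j=1,2,3$, $N^j\supseteq L^j(x^j_T)$ and $(x^j_t,I^j_t)$ is $\delta^j_t$-fine for every $t\in N^j$. A division is a finite collection of associated pairs whose cells are pairwise disjoint with union $R_{T.3}$; it is $\gamma$-fine if every pair is. *)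

theory Defs
  imports "HOL-Library.FuncSet" "HOL-Library.Extended_Real"
begin

text \<open>A cell of the real line is encoded by its pair of vertices (u,v) in the extended reals:
 ]u,v] with u<v real, ]-\<infinity>,v] with v real, or ]u,\<infinity>[ with u real.\<close>

type_synonym cell1 = "ereal \<times> ereal"

definition is_cell1 :: "cell1 \<Rightarrow> bool" where
  "is_cell1 c \<longleftrightarrow> fst c < snd c \<and> \<not> (fst c = -\<infinity> \<and> snd c = \<infinity>)"

definition cell1_set :: "cell1 \<Rightarrow> real set" where
  "cell1_set c = {x. fst c < ereal x \<and> ereal x \<le> snd c}"

definition assoc1 :: "ereal \<Rightarrow> cell1 \<Rightarrow> bool" where
  "assoc1 y c \<longleftrightarrow> y = fst c \<or> y = snd c"

definition fine1 :: "(ereal \<Rightarrow> real) \<Rightarrow> ereal \<Rightarrow> cell1 \<Rightarrow> bool" where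
  "fine1 \<delta> y c \<longleftrightarrow>
     (\<exists>u v. c = (ereal u, ereal v) \<and> v - u < \<delta> y)
   \<or> (y = -\<infinity> \<and> fst c = -\<infinity> \<and> (\<exists>v. snd c = ereal v \<and> v < - 1 / \<delta> y))
   \<or> (y = \<infinity> \<and> snd c = \<infinity> \<and> (\<exists>u. fst c = ereal u \<and> u > 1 / \<delta> y))"

abbreviation J3 :: "nat set" where "J3 \<equiv> {1,2,3}"

definition space3 :: "'a set \<Rightarrow> (nat \<Rightarrow> 'a \<Rightarrow> real) set" where
  "space3 T = J3 \<rightarrow>\<^sub>E (T \<rightarrow>\<^sub>E UNIV)"

definition tags3 :: "'a set \<Rightarrow> (nat \<Rightarrow> 'a \<Rightarrow> ereal) set" where
  "tags3 T = J3 \<rightarrow>\<^sub>E (T \<rightarrow>\<^sub>E UNIV)"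

text \<open>A cell I[N] = I^1[N^1] x I^2[N^2] x I^3[N^3], encoded by N (N j in N(T)) and
  the one-dimensional cells I j t for t in N j.\<close>
type_synonym 'a cell3 = "(nat \<Rightarrow> 'a set) \<times> (nat \<Rightarrow> 'a \<Rightarrow> cell1)"

definition is_cell3 :: "'a set \<Rightarrow> 'a cell3 \<Rightarrow> bool" where
  "is_cell3 T C \<longleftrightarrow> (\<forall>j\<in>J3. finite (fst C j) \<and> fst C j \<subseteq> T \<and>
                         (\<forall>t\<in>fst C j. is_cell1 (snd C j t)))"

definition cell3_set :: "'a set \<Rightarrow> 'a cell3 \<Rightarrow> (nat \<Rightarrow> 'a \<Rightarrow> real) set" where
  "cell3_set T C = {X \<in> space3 T. \<forall>j\<in>J3. \<forall>t\<in>fst C j. X j t \<in> cell1_set (snd C j t)}"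

definition assoc3 :: "(nat \<Rightarrow> 'a \<Rightarrow> ereal) \<Rightarrow> 'a cell3 \<Rightarrow> bool" where
  "assoc3 x C \<longleftrightarrow> (\<forall>j\<in>J3. \<forall>t\<in>fst C j. assoc1 (x j t) (snd C j t))"

definition gamma_fine :: "(nat \<Rightarrow> ('a \<Rightarrow> ereal) \<Rightarrow> 'a set) \<Rightarrow> (nat \<Rightarrow> 'a \<Rightarrow> ereal \<Rightarrow> real)
    \<Rightarrow> (nat \<Rightarrow> 'a \<Rightarrow> ereal) \<Rightarrow> 'a cell3 \<Rightarrow> bool" where
  "gamma_fine L \<delta> x C \<longleftrightarrow> (\<forall>j\<in>J3. L j (x j) \<subseteq> fst C j \<and>
       (\<forall>t\<in>fst C j. fine1 (\<delta> j t) (x j t) (snd C j t)))"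

definition division3 :: "'a set \<Rightarrow> ((nat \<Rightarrow> 'a \<Rightarrow> ereal) \<times> 'a cell3) set \<Rightarrow> bool" where
  "division3 T D \<longleftrightarrow> finite D
     \<and> (\<forall>(x, C)\<in>D. x \<in> tags3 T \<and> is_cell3 T C \<and> assoc3 x C)
     \<and> (\<forall>p\<in>D. \<forall>q\<in>D. p \<noteq> q \<longrightarrow> cell3_set T (snd p) \<inter> cell3_set T (snd q) = {})
     \<and> (\<Union>p\<in>D. cell3_set T (snd p)) = space3 T"

definition gamma_fine_division3 :: "'a set \<Rightarrow> (nat \<Rightarrow> ('a \<Rightarrow> ereal) \<Rightarrow> 'a set)
    \<Rightarrow> (nat \<Rightarrow> 'a \<Rightarrow> ereal \<Rightarrow> real) \<Rightarrow> ((nat \<Rightarrow> 'a \<Rightarrow> ereal) \<times> 'a cell3) set \<Rightarrow> bool" where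
  "gamma_fine_division3 T L \<delta> D \<longleftrightarrow> division3 T D \<and> (\<forall>(x, C)\<in>D. gamma_fine L \<delta> x C)"

end

theory Submission
  imports Defs
begin


definition Om :: "'i set \<Rightarrow> ('i \<Rightarrow> 'v set) \<Rightarrow> ('i \<Rightarrow> 'v) set" where
  "Om S P = {\<omega>. \<forall>s\<in>S. \<omega> s \<in> P s}"
definition cyl :: "'i set \<Rightarrow> ('i \<Rightarrow> 'v set) \<Rightarrow> 'i set \<Rightarrow> ('i \<Rightarrow> 'v) \<Rightarrow> ('i \<Rightarrow> 'v) set" where
  "cyl S P G w = {\<omega> \<in> Om S P. \<forall>s\<in>G. \<omega> s = w s}"
definition cylg :: "'i set \<Rightarrow> ('i \<Rightarrow> 'v set) \<Rightarrow> ('i \<times> 'v) set \<Rightarrow> ('i \<Rightarrow> 'v) set" where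
  "cylg S P g = {\<omega> \<in> Om S P. \<forall>(s,v)\<in>g. \<omega> s = v}"
definition RGF :: "'i set \<Rightarrow> ('i \<Rightarrow> 'v set) \<Rightarrow> (('i \<Rightarrow> 'v) \<Rightarrow> 'i set) \<Rightarrow> ('i \<times> 'v) set \<Rightarrow> ('i set \<times> ('i \<Rightarrow> 'v)) set \<Rightarrow> bool" where
  "RGF S P \<Lambda> g F \<longleftrightarrow> finite F \<and>
     (\<forall>(G,w)\<in>F. finite G \<and> G \<subseteq> S \<and> w \<in> cylg S P g \<and> \<Lambda> w \<subseteq> G \<union> Domain g) \<and>
     (\<forall>p\<in>F. \<forall>q\<in>F. p \<noteq> q \<longrightarrow> cyl S P (fst p) (snd p) \<inter> cyl S P (fst q) (snd q) \<inter> cylg S P g = {}) \<and>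
     cylg S P g \<subseteq> (\<Union>(G,w)\<in>F. cyl S P G w)"
definition RG :: "'i set \<Rightarrow> ('i \<Rightarrow> 'v set) \<Rightarrow> (('i \<Rightarrow> 'v) \<Rightarrow> 'i set) \<Rightarrow> ('i \<times> 'v) set \<Rightarrow> bool" where
  "RG S P \<Lambda> g \<longleftrightarrow> (\<exists>F. RGF S P \<Lambda> g F)"

lemma cylg_at: "\<omega> \<in> cylg S P g \<Longrightarrow> (s,v) \<in> g \<Longrightarrow> \<omega> s = v"
  unfolding cylg_def by fast

lemma RG_emptycyl: "cylg S P g = {} \<Longrightarrow> RG S P \<Lambda> g"
  unfolding RG_def RGF_def by (rule exI[of _ "{}"]) auto

lemma RG_extend:
  assumes t: "t \<in> S" "t \<notin> Domain g" and fin: "finite (P t)"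
    and ch: "\<And>p. p \<in> P t \<Longrightarrow> RG S P \<Lambda> (insert (t,p) g)"
  shows "RG S P \<Lambda> g"
proof -
  have "\<forall>p\<in>P t. \<exists>F. RGF S P \<Lambda> (insert (t,p) g) F" using ch unfolding RG_def by blast
  then obtain FF where FF0: "\<And>p. p \<in> P t \<Longrightarrow> RGF S P \<Lambda> (insert (t,p) g) (FF p)"
    using bchoice by metis
  note FF = FF0[unfolded RGF_def]
  define F where "F = (\<Union>p\<in>P t. (\<lambda>(G,w). (insert t G, w)) ` FF p)"
  have wt: "w t = p" if "p \<in> P t" "(G,w) \<in> FF p" for p G w
    using FF[OF that(1)] that(2) by (auto simp: cylg_def)
  show ?thesis unfolding RG_def RGF_def
  proof (intro exI[of _ F] conjI)
    show "finite F" unfolding F_def using fin FF by auto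
    show "\<forall>(G,w)\<in>F. finite G \<and> G \<subseteq> S \<and> w \<in> cylg S P g \<and> \<Lambda> w \<subseteq> G \<union> Domain g"
      unfolding F_def using FF t(1) by (fastforce simp: cylg_def)
    show "\<forall>p\<in>F. \<forall>q\<in>F. p \<noteq> q \<longrightarrow> cyl S P (fst p) (snd p) \<inter> cyl S P (fst q) (snd q) \<inter> cylg S P g = {}"
    proof (intro ballI impI)
      fix a b assume a: "a \<in> F" and b: "b \<in> F" and ab: "a \<noteq> b"
      from a obtain p1 G1 w1 where p1: "p1 \<in> P t" "(G1,w1) \<in> FF p1" "a = (insert t G1, w1)"
        unfolding F_def by auto
      from b obtain p2 G2 w2 where p2: "p2 \<in> P t" "(G2,w2) \<in> FF p2" "b = (insert t G2, w2)"
        unfolding F_def by auto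
      show "cyl S P (fst a) (snd a) \<inter> cyl S P (fst b) (snd b) \<inter> cylg S P g = {}"
      proof (rule ccontr)
        assume "\<not> ?thesis"
        then obtain \<omega> where om: "\<omega> \<in> cyl S P (insert t G1) w1" "\<omega> \<in> cyl S P (insert t G2) w2" "\<omega> \<in> cylg S P g"
          using p1 p2 by auto
        have "\<omega> t = p1" "\<omega> t = p2" using om wt[OF p1(1,2)] wt[OF p2(1,2)] by (auto simp: cyl_def)
        hence eq: "p1 = p2" by simp
        have "(G1,w1) \<noteq> (G2,w2)" using ab p1 p2 by auto
        moreover have "\<omega> \<in> cyl S P G1 w1 \<inter> cyl S P G2 w2 \<inter> cylg S P (insert (t,p1) g)"
          using om \<open>\<omega> t = p1\<close> by (auto simp: cyl_def cylg_def)
        ultimately show False using FF[OF p1(1)] p1(2) p2(2) eq by fastforce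
      qed
    qed
    show "cylg S P g \<subseteq> (\<Union>(G,w)\<in>F. cyl S P G w)"
    proof
      fix \<omega> assume om: "\<omega> \<in> cylg S P g"
      let ?p = "\<omega> t"
      have p: "?p \<in> P t" using om t(1) by (auto simp: cylg_def Om_def)
      have "\<omega> \<in> cylg S P (insert (t,?p) g)" using om by (auto simp: cylg_def)
      then obtain G w where Gw: "(G,w) \<in> FF ?p" "\<omega> \<in> cyl S P G w" using FF[OF p] by blast
      have "w t = ?p" using wt[OF p Gw(1)] .
      hence "\<omega> \<in> cyl S P (insert t G) w" using Gw(2) by (auto simp: cyl_def)
      moreover have "(insert t G, w) \<in> F" unfolding F_def using p Gw(1) by force
      ultimately show "\<omega> \<in> (\<Union>(G,w)\<in>F. cyl S P G w)" by blast
    qed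
  qed
qed

lemma RG_chain:
  assumes LamS: "\<And>\<omega>. \<omega> \<in> Om S P \<Longrightarrow> finite (\<Lambda> \<omega>)"
    and ch: "chain\<^sub>\<subseteq> C" "C \<noteq> {}"
    and good: "RG S P \<Lambda> (\<Union>C)"
  shows "\<exists>g\<in>C. RG S P \<Lambda> g"
proof (cases "\<exists>g\<in>C. cylg S P g = {}")
  case True then show ?thesis using RG_emptycyl by blast
next
  case False
  hence ne: "\<And>g. g \<in> C \<Longrightarrow> cylg S P g \<noteq> {}" by blast
  define U where "U = \<Union>C"
  have fn: "v1 = v2" if sv: "(s,v1) \<in> U" "(s,v2) \<in> U" for s v1 v2
  proof -
    obtain g1 g2 where g: "g1 \<in> C" "g2 \<in> C" "(s,v1) \<in> g1" "(s,v2) \<in> g2" using sv U_def by auto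
    have "g1 \<subseteq> g2 \<or> g2 \<subseteq> g1" using ch(1) g unfolding chain_subset_def by blast
    then obtain g where "g \<in> C" "(s,v1) \<in> g" "(s,v2) \<in> g" using g by blast
    moreover obtain \<omega> where "\<omega> \<in> cylg S P g" using ne[OF \<open>g \<in> C\<close>] by blast
    ultimately show ?thesis using cylg_at by metis
  qed
  have valP: "v \<in> P s" if sv: "(s,v) \<in> U" "s \<in> S" for s v
  proof -
    obtain g where "g \<in> C" "(s,v) \<in> g" using sv U_def by auto
    moreover obtain \<omega> where "\<omega> \<in> cylg S P g" using ne[OF \<open>g \<in> C\<close>] by blast
    ultimately show ?thesis using sv(2) by (auto simp: cylg_def Om_def)
  qed
  from good obtain F where "RGF S P \<Lambda> U F" unfolding RG_def U_def by blast
  note Fc = this[unfolded RGF_def]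
  note F = Fc[THEN conjunct1] Fc[THEN conjunct2, THEN conjunct1] Fc[THEN conjunct2, THEN conjunct2, THEN conjunct1] Fc[THEN conjunct2, THEN conjunct2, THEN conjunct2]
  define E where "E = (\<Union>(G,w)\<in>F. G \<union> \<Lambda> w)"
  have wOm: "w \<in> Om S P" if "(G,w) \<in> F" for G w using F(2) that by (auto simp: cylg_def)
  have finE: "finite E" unfolding E_def using F(1) F(2) LamS wOm by auto
  define K where "K = {(s, THE v. (s,v) \<in> U) | s. s \<in> E \<inter> Domain U}"
  have KU: "K \<subseteq> \<Union>C"
  proof
    fix x assume "x \<in> K"
    then obtain s where s: "x = (s, THE v. (s,v) \<in> U)" "s \<in> Domain U" unfolding K_def by auto
    then obtain v where v: "(s,v) \<in> U" by auto
    have "(THE v. (s,v) \<in> U) = v" using v fn by blast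
    thus "x \<in> \<Union>C" using s v U_def by simp
  qed
  have "finite K" unfolding K_def using finE by auto
  then obtain g where g: "g \<in> C" "K \<subseteq> g"
    using finite_subset_Union_chain[OF _ KU ch(2)] ch(1) unfolding chain_subset_alt_def by metis
  have gU: "g \<subseteq> U" using g U_def by auto
  have EDom: "E \<inter> Domain U \<subseteq> Domain g" using g(2) unfolding K_def by force
  have cylgU: "cylg S P U \<subseteq> cylg S P g" using gU by (auto simp: cylg_def)
  define md where "md \<omega> = (\<lambda>s. if s \<in> Domain U \<and> s \<notin> E then (THE v. (s,v) \<in> U) else \<omega> s)" for \<omega>
  have md: "md \<omega> \<in> cylg S P U" "\<forall>s\<in>E. md \<omega> s = \<omega> s" if om: "\<omega> \<in> cylg S P g" for \<omega>
  proof -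
    show "\<forall>s\<in>E. md \<omega> s = \<omega> s" unfolding md_def by auto
    have "md \<omega> \<in> Om S P"
      unfolding Om_def
    proof safe
      fix s assume s: "s \<in> S"
      show "md \<omega> s \<in> P s"
      proof (cases "s \<in> Domain U \<and> s \<notin> E")
        case True
        then obtain v where v: "(s,v) \<in> U" by auto
        have "(THE v. (s,v) \<in> U) = v" using v fn by blast
        then show ?thesis using True v valP s by (simp add: md_def)
      next
        case False then show ?thesis using om s by (auto simp: md_def cylg_def Om_def)
      qed
    qed
    moreover have "md \<omega> s = v" if sv: "(s,v) \<in> U" for s v
    proof (cases "s \<in> E")
      case False
      have "(THE v. (s,v) \<in> U) = v" using sv fn by blast
      then show ?thesis using False sv by (auto simp: md_def)
    next
      case True
      then obtain v' where "(s,v') \<in> g" using EDom sv by auto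
      moreover then have "v' = v" using gU sv fn by blast
      ultimately show ?thesis using om True by (auto simp: md_def cylg_def)
    qed
    ultimately show "md \<omega> \<in> cylg S P U" unfolding cylg_def by auto
  qed
  have cylE: "\<omega> \<in> cyl S P G w \<longleftrightarrow> \<omega>' \<in> cyl S P G w"
    if h: "(G,w) \<in> F" "\<omega> \<in> Om S P" "\<omega>' \<in> Om S P" "\<forall>s\<in>E. \<omega>' s = \<omega> s" for G w \<omega> \<omega>'
  proof -
    have "G \<subseteq> E" using h(1) unfolding E_def by auto
    hence "\<forall>s\<in>G. \<omega>' s = \<omega> s" using h(4) by blast
    thus ?thesis using h(2,3) unfolding cyl_def by auto
  qed
  have "RG S P \<Lambda> g" unfolding RG_def RGF_def
  proof (intro exI[of _ F] conjI)
    show "finite F" by fact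
    show "\<forall>(G,w)\<in>F. finite G \<and> G \<subseteq> S \<and> w \<in> cylg S P g \<and> \<Lambda> w \<subseteq> G \<union> Domain g"
    proof safe
      fix G w assume Gw: "(G,w) \<in> F"
      show "finite G" "w \<in> cylg S P g" using F(2) Gw cylgU by auto
      show "x \<in> S" if "x \<in> G" for x using F(2) Gw that by auto
      fix x assume x: "x \<in> \<Lambda> w" "x \<notin> Domain g"
      have "x \<in> E" using Gw x unfolding E_def by auto
      moreover have "x \<in> G \<union> Domain U" using F(2) Gw x by auto
      ultimately show "x \<in> G" using EDom x by auto
    qed
    show "\<forall>p\<in>F. \<forall>q\<in>F. p \<noteq> q \<longrightarrow> cyl S P (fst p) (snd p) \<inter> cyl S P (fst q) (snd q) \<inter> cylg S P g = {}"
    proof (intro ballI impI)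
      fix p q assume pq: "p \<in> F" "q \<in> F" "p \<noteq> q"
      show "cyl S P (fst p) (snd p) \<inter> cyl S P (fst q) (snd q) \<inter> cylg S P g = {}"
      proof (rule ccontr)
        assume "\<not> ?thesis"
        then obtain \<omega> where om: "\<omega> \<in> cyl S P (fst p) (snd p)" "\<omega> \<in> cyl S P (fst q) (snd q)" "\<omega> \<in> cylg S P g"
          by auto
        have o1: "\<omega> \<in> Om S P" "md \<omega> \<in> Om S P" using om md(1)[OF om(3)] by (auto simp: cylg_def)
        have "md \<omega> \<in> cyl S P (fst p) (snd p)" "md \<omega> \<in> cyl S P (fst q) (snd q)"
          using cylE[of "fst p" "snd p" \<omega> "md \<omega>"] cylE[of "fst q" "snd q" \<omega> "md \<omega>"] pq om o1 md(2)[OF om(3)]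
          by auto
        then show False using F(3) pq md(1)[OF om(3)] by blast
      qed
    qed
    show "cylg S P g \<subseteq> (\<Union>(G,w)\<in>F. cyl S P G w)"
    proof
      fix \<omega> assume om: "\<omega> \<in> cylg S P g"
      have o1: "\<omega> \<in> Om S P" "md \<omega> \<in> Om S P" using om md(1)[OF om] by (auto simp: cylg_def)
      obtain G w where Gw: "(G,w) \<in> F" "md \<omega> \<in> cyl S P G w" using F(4) md(1)[OF om] by blast
      have "\<omega> \<in> cyl S P G w" using cylE[OF Gw(1) o1 md(2)[OF om]] Gw(2) by simp
      thus "\<omega> \<in> (\<Union>(G,w)\<in>F. cyl S P G w)" using Gw(1) by blast
    qed
  qed
  thus ?thesis using g(1) by blast
qed

lemma RG_empty:
  assumes finP: "\<And>s. s \<in> S \<Longrightarrow> finite (P s)"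
    and LamS: "\<And>\<omega>. \<omega> \<in> Om S P \<Longrightarrow> finite (\<Lambda> \<omega>) \<and> \<Lambda> \<omega> \<subseteq> S"
  shows "RG S P \<Lambda> {}"
proof (rule ccontr)
  assume bad0: "\<not> RG S P \<Lambda> {}"
  define A where "A = {g. Domain g \<subseteq> S \<and> \<not> RG S P \<Lambda> g}"
  have "\<exists>M\<in>A. \<forall>X\<in>A. M \<subseteq> X \<longrightarrow> X = M"
  proof (rule Zorn_Lemma2, intro ballI)
    fix C assume C: "C \<in> chains A"
    show "\<exists>U\<in>A. \<forall>X\<in>C. X \<subseteq> U"
    proof (cases "C = {}")
      case True then show ?thesis using bad0 by (auto simp: A_def)
    next
      case False
      have "\<Union>C \<in> A"
      proof -
        have "Domain (\<Union>C) \<subseteq> S" using C by (auto simp: chains_def A_def)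
        moreover have "\<not> RG S P \<Lambda> (\<Union>C)"
        proof
          assume "RG S P \<Lambda> (\<Union>C)"
          then obtain g where "g \<in> C" "RG S P \<Lambda> g"
            using RG_chain[of S P \<Lambda> C] LamS C False by (auto simp: chains_def)
          thus False using C by (auto simp: chains_def A_def)
        qed
        ultimately show ?thesis by (simp add: A_def)
      qed
      thus ?thesis by blast
    qed
  qed
  then obtain M where M: "M \<in> A" "\<And>X. X \<in> A \<Longrightarrow> M \<subseteq> X \<Longrightarrow> X = M" by blast
  have nM: "\<not> RG S P \<Lambda> M" "Domain M \<subseteq> S" using M(1) by (auto simp: A_def)
  show False
  proof (cases "Domain M = S")
    case True
    obtain \<omega> where om: "\<omega> \<in> cylg S P M" using nM RG_emptycyl by blast
    have "RG S P \<Lambda> M" unfolding RG_def RGF_def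
    proof (intro exI[of _ "{({}, \<omega>)}"] conjI)
      show "\<forall>(G,w)\<in>{({}, \<omega>)}. finite G \<and> G \<subseteq> S \<and> w \<in> cylg S P M \<and> \<Lambda> w \<subseteq> G \<union> Domain M"
        using om LamS[of \<omega>] True by (auto simp: cylg_def)
      show "cylg S P M \<subseteq> (\<Union>(G,w)\<in>{({}, \<omega>)}. cyl S P G w)" by (auto simp: cylg_def cyl_def)
    qed auto
    thus False using nM by blast
  next
    case False
    then obtain t where t: "t \<in> S" "t \<notin> Domain M" using nM(2) by blast
    have "RG S P \<Lambda> (insert (t,p) M)" if "p \<in> P t" for p
    proof (rule ccontr)
      assume "\<not> ?thesis"
      hence "insert (t,p) M \<in> A" using t nM(2) by (auto simp: A_def)
      hence "insert (t,p) M = M" using M(2) by blast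
      thus False using t by auto
    qed
    hence "RG S P \<Lambda> M" using RG_extend[where P=P, OF t finP[OF t(1)]] by blast
    thus False using nM by blast
  qed
qed



definition okI :: "(ereal \<Rightarrow> real) \<Rightarrow> real set \<Rightarrow> (ereal \<times> cell1) set \<Rightarrow> bool" where
  "okI \<delta> X Q \<longleftrightarrow> finite Q \<and> (\<forall>(y,c)\<in>Q. is_cell1 c \<and> assoc1 y c \<and> fine1 \<delta> y c)
    \<and> (\<forall>p\<in>Q. \<forall>q\<in>Q. p \<noteq> q \<longrightarrow> cell1_set (snd p) \<inter> cell1_set (snd q) = {})
    \<and> (\<Union>(y,c)\<in>Q. cell1_set c) = X"

lemma okI_parts:
  assumes "okI \<delta> X Q"
  shows "finite Q" "\<forall>(y,c)\<in>Q. is_cell1 c \<and> assoc1 y c \<and> fine1 \<delta> y c"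
    "\<forall>p\<in>Q. \<forall>q\<in>Q. p \<noteq> q \<longrightarrow> cell1_set (snd p) \<inter> cell1_set (snd q) = {}"
    "(\<Union>(y,c)\<in>Q. cell1_set c) = X"
  using assms unfolding okI_def
  by (rule conjunct1, rule conjunct1[OF conjunct2], rule conjunct1[OF conjunct2[OF conjunct2]],
      rule conjunct2[OF conjunct2[OF conjunct2]])

lemma okI_fin: "okI \<delta> X Q \<Longrightarrow> finite Q" by (rule okI_parts(1))
lemma okI_mem: assumes "okI \<delta> X Q" "q \<in> Q"
  shows "is_cell1 (snd q) \<and> assoc1 (fst q) (snd q) \<and> fine1 \<delta> (fst q) (snd q)"
proof -
  obtain y c where q: "q = (y,c)" by (cases q)
  have "\<forall>(y,c)\<in>Q. is_cell1 c \<and> assoc1 y c \<and> fine1 \<delta> y c" by (rule okI_parts(2)[OF assms(1)])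
  from bspec[OF this assms(2)] show ?thesis unfolding q by simp
qed
lemma okI_disj: assumes "okI \<delta> X Q" "p \<in> Q" "q \<in> Q" "r \<in> cell1_set (snd p)" "r \<in> cell1_set (snd q)"
  shows "p = q"
proof (rule ccontr)
  assume "p \<noteq> q"
  with okI_parts(3)[OF assms(1)] assms(2,3) have "cell1_set (snd p) \<inter> cell1_set (snd q) = {}" by blast
  with assms(4,5) show False by blast
qed
lemma okI_cov: assumes "okI \<delta> X Q" "r \<in> X" shows "\<exists>q\<in>Q. r \<in> cell1_set (snd q)"
proof -
  have "r \<in> (\<Union>(y,c)\<in>Q. cell1_set c)" using okI_parts(4)[OF assms(1)] assms(2) by simp
  then obtain y c where "(y,c) \<in> Q" "r \<in> cell1_set c" by blast
  then show ?thesis by force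
qed

lemma cell1_ne: "is_cell1 c \<Longrightarrow> cell1_set c \<noteq> {}"
proof -
  assume c: "is_cell1 c"
  obtain u v where uv: "c = (u,v)" by (cases c)
  show ?thesis
  proof (cases v)
    case (real r) then show ?thesis using c uv by (auto simp: is_cell1_def cell1_set_def)
  next
    case PInf
    then obtain r where "u = ereal r" using c uv by (cases u) (auto simp: is_cell1_def)
    then have "r + 1 \<in> cell1_set c" using uv PInf by (auto simp: cell1_set_def)
    then show ?thesis by blast
  next
    case MInf then show ?thesis using c uv by (auto simp: is_cell1_def)
  qed
qed

lemma okI_union:
  assumes "okI \<delta> X1 Q1" "okI \<delta> X2 Q2" "X1 \<inter> X2 = {}"
  shows "okI \<delta> (X1 \<union> X2) (Q1 \<union> Q2)"
proof -
  have sub1: "cell1_set (snd p) \<subseteq> X1" if "p \<in> Q1" for p using assms(1) that unfolding okI_def by auto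
  have sub2: "cell1_set (snd p) \<subseteq> X2" if "p \<in> Q2" for p using assms(2) that unfolding okI_def by auto
  have ne: "cell1_set (snd p) \<noteq> {}" if "p \<in> Q1 \<union> Q2" for p
    using assms(1,2) that cell1_ne unfolding okI_def by auto
  have "cell1_set (snd p) \<inter> cell1_set (snd q) = {}" if pq: "p \<in> Q1 \<union> Q2" "q \<in> Q1 \<union> Q2" "p \<noteq> q" for p q
  proof -
    consider "p \<in> Q1" "q \<in> Q1" | "p \<in> Q2" "q \<in> Q2" | "p \<in> Q1" "q \<in> Q2" | "p \<in> Q2" "q \<in> Q1"
      using pq(1,2) by auto
    then show ?thesis
    proof cases
      case 1 then show ?thesis using assms(1) pq(3) unfolding okI_def by blast
    next
      case 2 then show ?thesis using assms(2) pq(3) unfolding okI_def by blast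
    next
      case 3 then show ?thesis using sub1 sub2 assms(3) by blast
    next
      case 4 then show ?thesis using sub1 sub2 assms(3) by blast
    qed
  qed
  then show ?thesis using assms(1,2) unfolding okI_def by auto
qed

lemma okI_single_r:
  assumes "u < v" "v - u < \<delta> (ereal v)"
  shows "okI \<delta> {x. u < x \<and> x \<le> v} {(ereal v, (ereal u, ereal v))}"
  using assms unfolding okI_def by (auto simp: is_cell1_def assoc1_def fine1_def cell1_set_def)

lemma okI_single_l:
  assumes "u < v" "v - u < \<delta> (ereal u)"
  shows "okI \<delta> {x. u < x \<and> x \<le> v} {(ereal u, (ereal u, ereal v))}"
  using assms unfolding okI_def by (auto simp: is_cell1_def assoc1_def fine1_def cell1_set_def)

lemma okI_join:
  assumes "okI \<delta> {x. a < x \<and> x \<le> c} Q1" "okI \<delta> {x. c < x \<and> x \<le> d} Q2" "a \<le> c" "c \<le> d"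
  shows "\<exists>Q. okI \<delta> {x. a < x \<and> x \<le> d} Q"
proof -
  have "{x. a < x \<and> x \<le> c} \<union> {x. c < x \<and> x \<le> d} = {x. a < x \<and> x \<le> d}" using assms(3,4) by auto
  then show ?thesis using okI_union[OF assms(1,2)] by fastforce
qed

lemma cousin1:
  assumes pos: "\<And>y. \<delta> y > 0" and ab: "a \<le> b"
  shows "\<exists>Q. okI \<delta> {x. a < x \<and> x \<le> b} Q"
proof -
  define S where "S = {c. a \<le> c \<and> c \<le> b \<and> (\<exists>Q. okI \<delta> {x. a < x \<and> x \<le> c} Q)}"
  have aS: "a \<in> S" unfolding S_def using ab by (auto intro!: exI[of _ "{}"] simp: okI_def)
  have bdd: "bdd_above S" unfolding S_def by (auto intro: bdd_aboveI[of _ b])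
  define s where "s = Sup S"
  have as: "a \<le> s" unfolding s_def using aS bdd by (rule cSup_upper)
  have sb: "s \<le> b" unfolding s_def using aS by (intro cSup_least) (auto simp: S_def)
  define e where "e = \<delta> (ereal s)"
  have e: "e > 0" using pos e_def by simp
  have "s - e < s" using e by simp
  then obtain c where c: "c \<in> S" "s - e < c" unfolding s_def using aS bdd less_cSup_iff[of S] by blast
  have cs: "c \<le> s" unfolding s_def using c(1) bdd by (rule cSup_upper)
  have okS: "\<exists>Q. okI \<delta> {x. a < x \<and> x \<le> s} Q"
  proof (cases "c = s")
    case True then show ?thesis using c S_def by auto
  next
    case False
    then have "c < s" using cs by simp
    from okI_single_r[of c s \<delta>, OF this] c(2) e_def
    have "okI \<delta> {x. c < x \<and> x \<le> s} {(ereal s, (ereal c, ereal s))}" by simp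
    moreover obtain Q1 where "okI \<delta> {x. a < x \<and> x \<le> c} Q1" using c(1) S_def by auto
    ultimately show ?thesis using okI_join c(1) cs S_def by blast
  qed
  show ?thesis
  proof (cases "s < b")
    case True
    define d where "d = min b (s + e/2)"
    have sd: "s < d" "d - s < \<delta> (ereal s)" "d \<le> b" using True e unfolding d_def e_def by auto
    from okI_single_l[of s d \<delta>, OF sd(1,2)] okS okI_join[of \<delta> a s _ d] as sd
    have "\<exists>Q. okI \<delta> {x. a < x \<and> x \<le> d} Q" by (meson less_imp_le)
    then have "d \<in> S" unfolding S_def using as sd by auto
    then have "d \<le> s" unfolding s_def using bdd by (rule cSup_upper)
    then show ?thesis using sd by simp
  next
    case False then show ?thesis using okS sb by simp
  qed
qed

lemma line1:
  assumes pos: "\<And>y. \<delta> y > 0"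
  shows "\<exists>Q. okI \<delta> UNIV Q"
proof -
  define A where "A = -1/\<delta> (-\<infinity>) - 1"
  define B where "B = 1/\<delta> \<infinity> + 1"
  have p1: "1/\<delta> (-\<infinity>) > 0" "1/\<delta> \<infinity> > 0" using pos[of "-\<infinity>"] pos[of "\<infinity>"] by simp_all
  have AB: "A \<le> B" unfolding A_def B_def using p1 by linarith
  obtain Q where Q: "okI \<delta> {x. A < x \<and> x \<le> B} Q" using cousin1[of \<delta>, OF pos AB] by blast
  have r1: "okI \<delta> {x. x \<le> A} {(-\<infinity>, (-\<infinity>, ereal A))}"
    unfolding okI_def by (auto simp: is_cell1_def assoc1_def fine1_def cell1_set_def A_def)
  have r2: "okI \<delta> {x. B < x} {(\<infinity>, (ereal B, \<infinity>))}"
    unfolding okI_def by (auto simp: is_cell1_def assoc1_def fine1_def cell1_set_def B_def)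
  have 1: "okI \<delta> ({x. x \<le> A} \<union> {x. A < x \<and> x \<le> B}) ({(-\<infinity>, (-\<infinity>, ereal A))} \<union> Q)"
    by (rule okI_union[OF r1 Q]) auto
  have 2: "okI \<delta> (({x. x \<le> A} \<union> {x. A < x \<and> x \<le> B}) \<union> {x. B < x}) (({(-\<infinity>, (-\<infinity>, ereal A))} \<union> Q) \<union> {(\<infinity>, (ereal B, \<infinity>))})"
    by (rule okI_union[OF 1 r2]) (use AB in auto)
  have "({x. x \<le> A} \<union> {x. A < x \<and> x \<le> B}) \<union> {x. B < x} = UNIV" by auto
  then show ?thesis using 2 by auto
qed



theorem theorem6:
  fixes T :: "'a set"
    and L :: "nat \<Rightarrow> ('a \<Rightarrow> ereal) \<Rightarrow> 'a set"
    and \<delta> :: "nat \<Rightarrow> 'a \<Rightarrow> ereal \<Rightarrow> real"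
  assumes "infinite T"
    and "\<forall>j\<in>J3. \<forall>x\<in>T \<rightarrow>\<^sub>E UNIV. finite (L j x) \<and> L j x \<subseteq> T"
    and "\<forall>j\<in>J3. \<forall>t\<in>T. \<forall>y. \<delta> j t y > 0"
  shows "\<exists>D. gamma_fine_division3 T L \<delta> D"
proof -
  note LT = assms(2) and pos = assms(3)
  have exQ: "\<exists>Q. okI (\<delta> j t) UNIV Q" if jt: "j \<in> J3" "t \<in> T" for j t
    by (rule line1) (use pos jt in auto)
  define Q where "Q j t = (SOME Q. okI (\<delta> j t) UNIV Q)" for j t
  have Q: "okI (\<delta> j t) UNIV (Q j t)" if jt: "j \<in> J3" "t \<in> T" for j t
    unfolding Q_def by (rule someI_ex[OF exQ[OF jt]])
  define S where "S = J3 \<times> T"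
  define P where "P = (\<lambda>(j,t). Q j t)"
  define tagx where "tagx w = (\<lambda>j\<in>J3. \<lambda>t\<in>T. fst (w (j,t)))" for w :: "nat \<times> 'a \<Rightarrow> ereal \<times> cell1"
  define Lam where "Lam w = {(j,t). j \<in> J3 \<and> t \<in> L j (tagx w j)}" for w
  have tagxE: "tagx w j \<in> T \<rightarrow>\<^sub>E UNIV" if "j \<in> J3" for w j using that by (auto simp: tagx_def)
  have finP: "finite (P s)" if s0: "s \<in> S" for s
  proof -
    obtain j t where s: "s = (j,t)" by (cases s)
    then have jt: "j \<in> J3" "t \<in> T" using s0 S_def by auto
    show ?thesis using okI_fin[OF Q[OF jt]] s P_def by simp
  qed
  have LamS: "finite (Lam \<omega>) \<and> Lam \<omega> \<subseteq> S" for \<omega>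
  proof -
    have "Lam \<omega> \<subseteq> (\<Union>j\<in>J3. {j} \<times> L j (tagx \<omega> j))" unfolding Lam_def by auto
    moreover have "finite (\<Union>j\<in>J3. {j} \<times> L j (tagx \<omega> j))" using LT tagxE by auto
    moreover have "Lam \<omega> \<subseteq> S" unfolding Lam_def S_def using LT tagxE by blast
    ultimately show ?thesis by (auto intro: finite_subset)
  qed
  have "RG S P Lam {}" by (rule RG_empty) (use finP LamS in auto)
  then obtain F where "RGF S P Lam {} F" unfolding RG_def by blast
  moreover have cg: "cylg S P {} = Om S P" by (simp add: cylg_def)
  ultimately have Fc: "finite F \<and>
     (\<forall>(G,w)\<in>F. finite G \<and> G \<subseteq> S \<and> w \<in> Om S P \<and> Lam w \<subseteq> G) \<and>
     (\<forall>p\<in>F. \<forall>q\<in>F. p \<noteq> q \<longrightarrow> cyl S P (fst p) (snd p) \<inter> cyl S P (fst q) (snd q) \<inter> Om S P = {}) \<and>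
     Om S P \<subseteq> (\<Union>(G,w)\<in>F. cyl S P G w)" unfolding RGF_def by simp
  note F = Fc[THEN conjunct1] Fc[THEN conjunct2, THEN conjunct1] Fc[THEN conjunct2, THEN conjunct2, THEN conjunct1] Fc[THEN conjunct2, THEN conjunct2, THEN conjunct2]
  have Fp: "finite G \<and> G \<subseteq> S \<and> w \<in> Om S P \<and> Lam w \<subseteq> G" if "(G,w) \<in> F" for G w
    using bspec[OF F(2) that] by simp
  have inS: "j \<in> J3 \<and> t \<in> T" if "(j,t) \<in> S" for j t using that unfolding S_def by simp
  have OmQ: "w (j,t) \<in> Q j t" if "w \<in> Om S P" "(j,t) \<in> S" for w j t
    using that unfolding Om_def P_def by auto
  have tagx_eq: "tagx w j t = fst (w (j,t))" if "(j,t) \<in> S" for w j t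
    using inS[OF that] unfolding tagx_def by simp
  have qok: "is_cell1 (snd q) \<and> assoc1 (fst q) (snd q) \<and> fine1 (\<delta> j t) (fst q) (snd q)"
    if "(j,t) \<in> S" "q \<in> Q j t" for j t q
    using okI_mem[OF Q[OF conjunct1[OF inS[OF that(1)]] conjunct2[OF inS[OF that(1)]]] that(2)] .
  define cellof where "cellof G w = ((\<lambda>j. {t. (j,t) \<in> G}), (\<lambda>j t. snd (w (j,t))))"
    for G :: "(nat \<times> 'a) set" and w :: "nat \<times> 'a \<Rightarrow> ereal \<times> cell1"
  have cellof_simps: "fst (cellof G w) j = {t. (j,t) \<in> G}" "snd (cellof G w) j t = snd (w (j,t))" for G w j t
    unfolding cellof_def by simp_all
  define D where "D = (\<lambda>(G,w). (tagx w, cellof G w)) ` F"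
  define pk where "pk X = (\<lambda>(j,t). SOME q. q \<in> Q j t \<and> X j t \<in> cell1_set (snd q))"
    for X :: "nat \<Rightarrow> 'a \<Rightarrow> real"
  have pk: "pk X (j,t) \<in> Q j t \<and> X j t \<in> cell1_set (snd (pk X (j,t)))" if jt0: "(j,t) \<in> S" for X j t
  proof -
    have jt: "j \<in> J3" "t \<in> T" using inS[OF jt0] by auto
    have ex: "\<exists>q. q \<in> Q j t \<and> X j t \<in> cell1_set (snd q)" using okI_cov[OF Q[OF jt], of "X j t"] by blast
    have eq: "pk X (j,t) = (SOME q. q \<in> Q j t \<and> X j t \<in> cell1_set (snd q))" unfolding pk_def by simp
    show ?thesis unfolding eq by (rule someI_ex[OF ex])
  qed
  have pkOm: "pk X \<in> Om S P" for X
    unfolding Om_def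
  proof (intro CollectI ballI)
    fix s assume s0: "s \<in> S"
    obtain j t where s: "s = (j,t)" by (cases s)
    show "pk X s \<in> P s" using pk[of j t X] s0 unfolding s P_def by simp
  qed
  have uniq: "q1 = q2" if "(j,t) \<in> S" "q1 \<in> Q j t" "q2 \<in> Q j t"
     "r \<in> cell1_set (snd q1)" "r \<in> cell1_set (snd q2)" for j t q1 q2 r
    using okI_disj[OF Q[OF conjunct1[OF inS[OF that(1)]] conjunct2[OF inS[OF that(1)]]] that(2-5)] .
  have key: "X \<in> cell3_set T (cellof G w) \<longleftrightarrow> pk X \<in> cyl S P G w"
    if Gw: "(G,w) \<in> F" and X: "X \<in> space3 T" for G w X
  proof -
    have GS: "G \<subseteq> S" and wOm: "w \<in> Om S P" using Fp[OF Gw] by auto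
    show ?thesis
    proof
      assume X3: "X \<in> cell3_set T (cellof G w)"
      have eqs: "pk X s = w s" if sG: "s \<in> G" for s
      proof -
        obtain j t where s: "s = (j,t)" by (cases s)
        have jtS: "(j,t) \<in> S" using sG s GS by auto
        have jt: "j \<in> J3" "t \<in> T" using inS[OF jtS] by auto
        have "X j t \<in> cell1_set (snd (w (j,t)))"
          using X3 jt sG s unfolding cell3_set_def cellof_simps by auto
        then show ?thesis using uniq[OF jtS conjunct1[OF pk[OF jtS]] OmQ[OF wOm jtS] conjunct2[OF pk[OF jtS]]] s
          by simp
      qed
      show "pk X \<in> cyl S P G w" unfolding cyl_def using pkOm eqs by blast
    next
      assume c: "pk X \<in> cyl S P G w"
      have "\<forall>j\<in>J3. \<forall>t\<in>fst (cellof G w) j. X j t \<in> cell1_set (snd (cellof G w) j t)"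
      proof (intro ballI)
        fix j t assume j: "j \<in> J3" and t: "t \<in> fst (cellof G w) j"
        have jtG: "(j,t) \<in> G" using t unfolding cellof_simps by simp
        have jtS: "(j,t) \<in> S" using jtG GS by auto
        have "pk X (j,t) = w (j,t)" using c jtG unfolding cyl_def by blast
        then show "X j t \<in> cell1_set (snd (cellof G w) j t)"
          using conjunct2[OF pk[of j t X, OF jtS]] unfolding cellof_simps by simp
      qed
      then show "X \<in> cell3_set T (cellof G w)" using X unfolding cell3_set_def by blast
    qed
  qed
  have "gamma_fine_division3 T L \<delta> D"
    unfolding gamma_fine_division3_def division3_def
  proof (intro conjI)
    show "finite D" unfolding D_def using F(1) by simp
    show "\<forall>(x, C)\<in>D. x \<in> tags3 T \<and> is_cell3 T C \<and> assoc3 x C"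
    proof (intro ballI)
      fix p assume "p \<in> D"
      then obtain G w where Gw: "(G,w) \<in> F" and p: "p = (tagx w, cellof G w)" unfolding D_def by auto
      have GS: "G \<subseteq> S" and wOm: "w \<in> Om S P" and fG: "finite G" using Fp[OF Gw] by auto
      have h1: "tagx w \<in> tags3 T" unfolding tags3_def tagx_def by auto
      have fin: "finite {t. (j,t) \<in> G}" for j
      proof -
        have "{t. (j,t) \<in> G} = snd ` (G \<inter> {p. fst p = j})" by force
        then show ?thesis using fG by simp
      qed
      have h2: "is_cell3 T (cellof G w)" unfolding is_cell3_def
      proof (intro ballI conjI)
        fix j assume j: "j \<in> J3"
        show "finite (fst (cellof G w) j)" unfolding cellof_simps by (rule fin)
        show "fst (cellof G w) j \<subseteq> T" unfolding cellof_simps using GS inS by blast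
        fix t assume "t \<in> fst (cellof G w) j"
        then have jtS: "(j,t) \<in> S" using GS unfolding cellof_simps by auto
        show "is_cell1 (snd (cellof G w) j t)" unfolding cellof_simps
          using qok[OF jtS OmQ[OF wOm jtS]] by blast
      qed
      have h3: "assoc3 (tagx w) (cellof G w)" unfolding assoc3_def
      proof (intro ballI)
        fix j t assume j: "j \<in> J3" and "t \<in> fst (cellof G w) j"
        then have jtS: "(j,t) \<in> S" using GS unfolding cellof_simps by auto
        show "assoc1 (tagx w j t) (snd (cellof G w) j t)" unfolding cellof_simps tagx_eq[OF jtS]
          using qok[OF jtS OmQ[OF wOm jtS]] by blast
      qed
      show "case p of (x, C) \<Rightarrow> x \<in> tags3 T \<and> is_cell3 T C \<and> assoc3 x C"
        unfolding p using h1 h2 h3 by simp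
    qed
    show "\<forall>p\<in>D. \<forall>q\<in>D. p \<noteq> q \<longrightarrow> cell3_set T (snd p) \<inter> cell3_set T (snd q) = {}"
    proof (intro ballI impI)
      fix p q assume p: "p \<in> D" and q: "q \<in> D" and pq: "p \<noteq> q"
      obtain G1 w1 where g1: "(G1,w1) \<in> F" "p = (tagx w1, cellof G1 w1)" using p unfolding D_def by auto
      obtain G2 w2 where g2: "(G2,w2) \<in> F" "q = (tagx w2, cellof G2 w2)" using q unfolding D_def by auto
      have ne: "(G1,w1) \<noteq> (G2,w2)" using pq g1 g2 by auto
      show "cell3_set T (snd p) \<inter> cell3_set T (snd q) = {}"
      proof (rule ccontr)
        assume "\<not> ?thesis"
        then obtain X where X: "X \<in> cell3_set T (cellof G1 w1)" "X \<in> cell3_set T (cellof G2 w2)"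
          using g1 g2 by auto
        then have Xs: "X \<in> space3 T" unfolding cell3_set_def by auto
        have m1: "pk X \<in> cyl S P G1 w1" using key[OF g1(1) Xs] X(1) by simp
        have m2: "pk X \<in> cyl S P G2 w2" using key[OF g2(1) Xs] X(2) by simp
        have "cyl S P (fst (G1,w1)) (snd (G1,w1)) \<inter> cyl S P (fst (G2,w2)) (snd (G2,w2)) \<inter> Om S P = {}"
          using F(3) g1(1) g2(1) ne by blast
        then have "cyl S P G1 w1 \<inter> cyl S P G2 w2 \<inter> Om S P = {}" by simp
        then have "pk X \<notin> cyl S P G1 w1 \<inter> cyl S P G2 w2 \<inter> Om S P" by (simp only: empty_iff not_False_eq_True)
        moreover have "pk X \<in> cyl S P G1 w1 \<inter> cyl S P G2 w2 \<inter> Om S P" using m1 m2 pkOm by (rule IntI[OF IntI])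
        ultimately show False by contradiction
      qed
    qed
    show "(\<Union>p\<in>D. cell3_set T (snd p)) = space3 T"
    proof
      show "(\<Union>p\<in>D. cell3_set T (snd p)) \<subseteq> space3 T" unfolding cell3_set_def by auto
      show "space3 T \<subseteq> (\<Union>p\<in>D. cell3_set T (snd p))"
      proof
        fix X assume Xs: "X \<in> space3 T"
        have "pk X \<in> (\<Union>(G,w)\<in>F. cyl S P G w)" using F(4) pkOm by blast
        then obtain G w where Gw: "(G,w) \<in> F" "pk X \<in> cyl S P G w" by blast
        have "X \<in> cell3_set T (cellof G w)" using key[OF Gw(1) Xs] Gw(2) by simp
        moreover have "(tagx w, cellof G w) \<in> D" using Gw(1) unfolding D_def by force
        ultimately show "X \<in> (\<Union>p\<in>D. cell3_set T (snd p))" by force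
      qed
    qed
    show "\<forall>(x, C)\<in>D. gamma_fine L \<delta> x C"
    proof (intro ballI)
      fix p assume "p \<in> D"
      then obtain G w where Gw: "(G,w) \<in> F" and p: "p = (tagx w, cellof G w)" unfolding D_def by auto
      have GS: "G \<subseteq> S" and wOm: "w \<in> Om S P" and LG: "Lam w \<subseteq> G" using Fp[OF Gw] by auto
      have "gamma_fine L \<delta> (tagx w) (cellof G w)" unfolding gamma_fine_def
      proof (intro ballI conjI)
        fix j assume j: "j \<in> J3"
        show "L j (tagx w j) \<subseteq> fst (cellof G w) j"
        proof
          fix t assume "t \<in> L j (tagx w j)"
          then have "(j,t) \<in> Lam w" using j unfolding Lam_def by simp
          then show "t \<in> fst (cellof G w) j" using LG unfolding cellof_simps by auto
        qed
        fix t assume "t \<in> fst (cellof G w) j"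
        then have jtS: "(j,t) \<in> S" using GS unfolding cellof_simps by auto
        show "fine1 (\<delta> j t) (tagx w j t) (snd (cellof G w) j t)" unfolding cellof_simps tagx_eq[OF jtS]
          using qok[OF jtS OmQ[OF wOm jtS]] by blast
      qed
      then show "case p of (x, C) \<Rightarrow> gamma_fine L \<delta> x C" unfolding p by simp
    qed
  qed
  then show ?thesis by blast
qed

end
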